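(* Let $c>0$, $f>0$, $d\in\mathbb R$ and $n\ge 1$. Let $\eta$ be a real function that is continuously differentiable on a neighbourhood of $0$ in $H^2$, with $\eta$ and $\partial_t\eta$ bounded there. Define, for $v>0$, $$\chi(t,v)=\frac{c}{v}\exp\!\Big(-\frac{f}{v^{2}}\,(t+d\,v^n)^2\Big)+\eta(t,v),$$ and $\chi(t,0)=\eta(t,0)$ for $t\neq0$. Then there exist $\omega>0$ and a sufficiently small $\mathcal U$ such that $\chi\in\Psi_1^\omega(\mathcal U)$, where the function $\nu(t)$ in condition 2 of the definition can be chosen such that $\nu(t)^{-1}\to 0$ as $|t|\to 0$.
   Context: Let $H^2=\{(t,v)\in\mathbb R^2: v\ge 0\}$. $\mathcal U\subseteq H^2$ denotes the intersection of an open neighbourhood of $0\in\mathbb R^2$ with $H^2$, and $\mathcal U^*=\mathcal U\setminus\{0\}$. For $\omega>0$, $\Psi_1^\omega(\mathcal U)$ denotes the set of continuous real-valued functions $\chi$ on $\mathcal U^*$ such that: 1. $\chi$ is continuously differentiable on $\{(t,v)\in\mathcal U^*: v\neq 0\}$; 2. there is a function $t\mapsto\nu(t)>0$ (defined for $t\neq 0$) such that $|\chi(t,v)|\le\omega$ for all $(t,v)\in\mathcal U^*$ with $0\le v<|t|/\nu(t)$; 3. there are positive constants $c,K_1,K_2,\epsilon$ such that for all $(t,v)\in\mathcal U^*$ with $v\neq 0$: $\left|\chi(0,v)-\frac{c}{v}\right|<\frac{K_1}{v^{1-\epsilon}}$ (whenever $(0,v)\in\mathcal U^*$) and $\left|\frac{\partial}{\partial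 t}\chi(t,v)\right|<\frac{K_2}{v^2}$. (The constant $c$ in condition 3 is any positive constant, not necessarily the $c$ in the formula for $\chi$. Interpretation: $v=L^{-D}$, $t=(T-T_c(\infty))/T_c(\infty)$ measures the distance to the infinite-volume transition point, and the peak location converges as $|T_c(L)-T_c(\infty)|\le C L^{-m}$ with $m=nD\ge D$.) *)

theory Defs
  imports "HOL-Analysis.Analysis"
begin

definition H2 :: "(real \<times> real) set" where
  "H2 = {p. snd p \<ge> 0}"

text \<open>The class Psi_1^omega(U) with the function nu of condition 2 made explicit.
  Condition 1 (continuous differentiability on the part of U* with v \<noteq> 0) is
  expressed through the two partial derivatives Dt, Dv, which must be continuous;
  condition 3 uses the t-partial derivative Dt.\<close>
definition Psi1_nu ::
    "real \<Rightarrow> (real \<times> real) set \<Rightarrow> (real \<Rightarrow> real) \<Rightarrow> (real \<times> real \<Rightarrow> real) \<Rightarrow> bool" where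
  "Psi1_nu \<omega> U \<nu> g \<longleftrightarrow>
     (let Us = U - {(0,0)}; Ov = {p \<in> Us. snd p \<noteq> 0} in
      continuous_on Us g \<and>
      (\<exists>Dt Dv. (\<forall>p\<in>Ov. (g has_derivative (\<lambda>h. fst h * Dt p + snd h * Dv p)) (at p)) \<and>
              continuous_on Ov Dt \<and> continuous_on Ov Dv \<and>
              (\<exists>c K1 K2 \<epsilon>. c > 0 \<and> K1 > 0 \<and> K2 > 0 \<and> \<epsilon> > 0 \<and>
                 (\<forall>v. (0, v) \<in> Us \<and> v \<noteq> 0 \<longrightarrow> \<bar>g (0, v) - c / v\<bar> < K1 / v powr (1 - \<epsilon>)) \<and>
                 (\<forall>t v. (t, v) \<in> Us \<and> v \<noteq> 0 \<longrightarrow> \<bar>Dt (t, v)\<bar> < K2 / v\<^sup>2))) \<and>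
      (\<forall>t. t \<noteq> 0 \<longrightarrow> \<nu> t > 0) \<and>
      (\<forall>t v. (t, v) \<in> Us \<and> t \<noteq> 0 \<and> 0 \<le> v \<and> v < \<bar>t\<bar> / \<nu> t \<longrightarrow> \<bar>g (t, v)\<bar> \<le> \<omega>))"

definition Psi1 :: "real \<Rightarrow> (real \<times> real) set \<Rightarrow> (real \<times> real \<Rightarrow> real) \<Rightarrow> bool" where
  "Psi1 \<omega> U g \<longleftrightarrow> (\<exists>\<nu>. Psi1_nu \<omega> U \<nu> g)"

text \<open>The function chi of the lemma (values for v < 0 are irrelevant).\<close>
definition chi_fun ::
    "real \<Rightarrow> real \<Rightarrow> real \<Rightarrow> real \<Rightarrow> (real \<times> real \<Rightarrow> real) \<Rightarrow> real \<times> real \<Rightarrow> real" where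
  "chi_fun c f d n \<eta> p =
     (let t = fst p; v = snd p in
      if v > 0 then c / v * exp (- (f / v\<^sup>2) * (t + d * v powr n)\<^sup>2) + \<eta> (t, v)
      else \<eta> (t, v))"

end

theory Submission
  imports Defs
begin


lemma exp_neg_le: fixes s :: real assumes "s > 0" shows "exp (-s) \<le> 1 / s"
proof -
  have "1 + s \<le> exp s" by simp
  hence "s \<le> exp s" by linarith
  thus ?thesis using assms by (simp add: exp_minus divide_simps)
qed

lemma KB:
  fixes c f d n t v :: real
  assumes "c > 0" "f > 0" "n \<ge> 1" "0 < v" "v < 1" "0 < \<bar>t\<bar> - \<bar>d\<bar> * v"
  shows "c / v * exp (- (f / v\<^sup>2) * (t + d * v powr n)\<^sup>2) \<le> c * v / (f * (\<bar>t\<bar> - \<bar>d\<bar> * v)\<^sup>2)"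
proof -
  define m where "m = \<bar>t\<bar> - \<bar>d\<bar> * v"
  have m0: "m > 0" using assms m_def by simp
  have "v powr n \<le> v powr 1" by (rule powr_mono') (use assms in auto)
  hence vp: "v powr n \<le> v" using assms by simp
  have "\<bar>d * v powr n\<bar> \<le> \<bar>d\<bar> * v" using vp by (simp add: abs_mult mult_left_mono)
  hence ym: "m \<le> \<bar>t + d * v powr n\<bar>" unfolding m_def by linarith
  hence "m\<^sup>2 \<le> \<bar>t + d * v powr n\<bar>\<^sup>2" using m0 by (intro power_mono) auto
  hence m2: "m\<^sup>2 \<le> (t + d * v powr n)\<^sup>2" by simp
  define s0 where "s0 = f * m\<^sup>2 / v\<^sup>2"
  have s0: "s0 > 0" using m0 assms s0_def by simp
  have "f / v\<^sup>2 * m\<^sup>2 \<le> f / v\<^sup>2 * (t + d * v powr n)\<^sup>2"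
    using m2 assms by (intro mult_left_mono) auto
  hence "- (f / v\<^sup>2) * (t + d * v powr n)\<^sup>2 \<le> - s0" unfolding s0_def by simp
  hence "exp (- (f / v\<^sup>2) * (t + d * v powr n)\<^sup>2) \<le> exp (- s0)" by simp
  also have "\<dots> \<le> 1 / s0" using exp_neg_le[OF s0] .
  finally have "c / v * exp (- (f / v\<^sup>2) * (t + d * v powr n)\<^sup>2) \<le> c / v * (1 / s0)"
    using assms by (intro mult_left_mono) auto
  also have "\<dots> = c * v / (f * m\<^sup>2)" unfolding s0_def using assms m0
    by (simp add: field_simps power2_eq_square)
  finally show ?thesis unfolding m_def .
qed

lemma DtB:
  fixes c f v y :: real
  assumes "c > 0" "f > 0" "v > 0"
  shows "\<bar>c / v * exp (- (f / v\<^sup>2 * y\<^sup>2)) * (-(f / v\<^sup>2 * 2 * y))\<bar> \<le> c * (f + 1) / v\<^sup>2"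
proof -
  define w where "w = \<bar>y\<bar> / v"
  have w0: "w \<ge> 0" using assms w_def by simp
  have yw: "\<bar>y\<bar> = w * v" using assms w_def by simp
  have q: "f / v\<^sup>2 * y\<^sup>2 = f * w\<^sup>2"
  proof -
    have "y\<^sup>2 = (w * v)\<^sup>2" using yw by (metis power2_abs)
    thus ?thesis using assms by (simp add: power_mult_distrib)
  qed
  have "\<bar>c / v * exp (- (f / v\<^sup>2 * y\<^sup>2)) * (-(f / v\<^sup>2 * 2 * y))\<bar>
        = c / v\<^sup>2 * ((2 * f * w) * exp (- (f * w\<^sup>2)))"
  proof -
    have "\<bar>c / v * exp (- (f / v\<^sup>2 * y\<^sup>2)) * (-(f / v\<^sup>2 * 2 * y))\<bar>
        = c / v * exp (- (f * w\<^sup>2)) * (f / v\<^sup>2 * 2 * \<bar>y\<bar>)"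
      unfolding q[symmetric] using assms by (simp add: abs_mult)
    also have "\<dots> = c / v\<^sup>2 * ((2 * f * w) * exp (- (f * w\<^sup>2)))"
      unfolding yw using assms by (simp add: field_simps power2_eq_square)
    finally show ?thesis .
  qed
  also have "\<dots> \<le> c / v\<^sup>2 * (f + 1)"
  proof -
    have a: "2 * f * w \<le> (f + 1) * (1 + f * w\<^sup>2)"
    proof -
      have "0 \<le> f * (w - 1)\<^sup>2" using assms by simp
      hence "2 * f * w \<le> f + f * w\<^sup>2" by (simp add: power2_eq_square algebra_simps)
      also have "\<dots> \<le> (f + 1) * (1 + f * w\<^sup>2)" using assms w0
        by (simp add: algebra_simps power2_eq_square)
      finally show ?thesis .
    qed
    have b: "1 + f * w\<^sup>2 \<le> exp (f * w\<^sup>2)" by simp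
    have "(2 * f * w) * exp (- (f * w\<^sup>2)) \<le> (f + 1) * (1 + f * w\<^sup>2) * exp (- (f * w\<^sup>2))"
      using a by (intro mult_right_mono) auto
    also have "\<dots> \<le> (f + 1) * exp (f * w\<^sup>2) * exp (- (f * w\<^sup>2))"
      using b assms by (intro mult_right_mono mult_left_mono) auto
    also have "\<dots> = f + 1" by (simp add: exp_minus)
    finally show ?thesis using assms by (intro mult_left_mono) auto
  qed
  finally show ?thesis by simp
qed



lemma C3:
  fixes c f d n B :: real
  assumes "c > 0" "f > 0" "n \<ge> 1" "B \<ge> 0"
  shows "\<exists>c'>0. \<exists>K1>0. \<exists>\<epsilon>>0. \<forall>v e. 0 < v \<and> v < 1 \<and> \<bar>e\<bar> \<le> B \<longrightarrow>
           \<bar>c / v * exp (- (f / v\<^sup>2) * (d * v powr n)\<^sup>2) + e - c' / v\<bar> < K1 / v powr (1 - \<epsilon>)"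
proof (cases "n = 1")
  case True
  have key: "\<forall>v e. 0 < v \<and> v < 1 \<and> \<bar>e\<bar> \<le> B \<longrightarrow>
     \<bar>c / v * exp (- (f / v\<^sup>2) * (d * v powr n)\<^sup>2) + e - c * exp (- (f * d\<^sup>2)) / v\<bar> < (B + 1) / v powr (1 - 1/2)"
  proof (intro allI impI)
    fix v e :: real assume h: "0 < v \<and> v < 1 \<and> \<bar>e\<bar> \<le> B"
    have "(f / v\<^sup>2) * (d * v powr n)\<^sup>2 = f * d\<^sup>2" using h True by (simp add: field_simps power2_eq_square)
    hence "exp (- (f / v\<^sup>2) * (d * v powr n)\<^sup>2) = exp (- (f * d\<^sup>2))" by (metis minus_mult_left)
    hence eq: "c / v * exp (- (f / v\<^sup>2) * (d * v powr n)\<^sup>2) + e - c * exp (- (f * d\<^sup>2)) / v = e"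
      by simp
    have p1: "v powr (1 - 1/2) \<le> 1" using h by (intro powr_le1) auto
    have p0: "v powr (1 - 1/2) > 0" using h by simp
    have "B + 1 \<le> (B + 1) / v powr (1 - 1/2)" using p1 p0 assms
      by (simp add: le_divide_eq)
    hence "\<bar>e\<bar> < (B + 1) / v powr (1 - 1/2)" using h by linarith
    thus "\<bar>c / v * exp (- (f / v\<^sup>2) * (d * v powr n)\<^sup>2) + e - c * exp (- (f * d\<^sup>2)) / v\<bar> < (B + 1) / v powr (1 - 1/2)"
      by (simp only: eq)
  qed
  have "c * exp (- (f * d\<^sup>2)) > 0" "B + 1 > 0" "(1/2::real) > 0" using assms by auto
  thus ?thesis using key by blast
next
  case False
  define \<epsilon> where "\<epsilon> = min 1 (2 * n - 2)"
  have e0: "\<epsilon> > 0" "\<epsilon> \<le> 1" "\<epsilon> \<le> 2 * n - 2" using False assms \<epsilon>_def by auto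
  have key: "\<forall>v e. 0 < v \<and> v < 1 \<and> \<bar>e\<bar> \<le> B \<longrightarrow>
     \<bar>c / v * exp (- (f / v\<^sup>2) * (d * v powr n)\<^sup>2) + e - c / v\<bar> < (c * f * d\<^sup>2 + B + 1) / v powr (1 - \<epsilon>)"
  proof (intro allI impI)
    fix v e :: real assume h: "0 < v \<and> v < 1 \<and> \<bar>e\<bar> \<le> B"
    define a where "a = (f / v\<^sup>2) * (d * v powr n)\<^sup>2"
    have a0: "a \<ge> 0" using a_def assms h by simp
    have "1 - a \<le> exp (- a)" using exp_ge_add_one_self[of "-a"] by simp
    moreover have "exp (- a) \<le> 1" using a0 by simp
    ultimately have "\<bar>c / v * exp (- a) - c / v\<bar> \<le> c / v * a"
    proof -
      assume u1: "1 - a \<le> exp (- a)" and u2: "exp (- a) \<le> 1"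
      have cv: "c / v > 0" using h assms by simp
      have "c / v * exp (- a) - c / v = c / v * (exp (- a) - 1)" by (simp add: algebra_simps)
      also have "\<dots> \<le> 0" using cv u2 by (intro mult_nonneg_nonpos) auto
      finally have "\<bar>c / v * exp (- a) - c / v\<bar> = c / v * (1 - exp (- a))"
        by (simp add: algebra_simps)
      also have "\<dots> \<le> c / v * a" using cv u1 by (intro mult_left_mono) auto
      finally show ?thesis .
    qed
    hence A: "\<bar>c / v * exp (- a) + e - c / v\<bar> \<le> c / v * a + B" using h by linarith
    define P where "P = v powr (1 - \<epsilon>)"
    have P0: "P > 0" using h P_def by simp
    have P1: "P \<le> 1" unfolding P_def using h e0 by (intro powr_le1) auto
    have "(v powr n)\<^sup>2 * P = v powr (2 * n + 1 - \<epsilon>)"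
      unfolding P_def power2_eq_square by (simp add: powr_add[symmetric] algebra_simps)
    also have "\<dots> \<le> v powr 3" using h e0 by (intro powr_mono') auto
    also have "\<dots> = v ^ 3" using h by (simp add: powr_numeral)
    finally have vv: "(v powr n)\<^sup>2 * P \<le> v ^ 3" .
    have "c / v * a = c * f * d\<^sup>2 * ((v powr n)\<^sup>2 / v ^ 3)"
      unfolding a_def using h by (simp add: field_simps power2_eq_square power3_eq_cube)
    also have "\<dots> \<le> c * f * d\<^sup>2 * (1 / P)"
    proof (rule mult_left_mono)
      show "(v powr n)\<^sup>2 / v ^ 3 \<le> 1 / P" using vv P0 h by (simp add: divide_simps)
    qed (use assms in simp)
    finally have B1: "c / v * a \<le> c * f * d\<^sup>2 / P" by simp
    have B2: "B \<le> B / P" using P0 P1 assms by (simp add: le_divide_eq mult_left_le)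
    have B3: "0 < 1 / P" using P0 by simp
    have "\<bar>c / v * exp (- a) + e - c / v\<bar> < (c * f * d\<^sup>2 + B + 1) / P"
    proof -
      have "(c * f * d\<^sup>2 + B + 1) / P = c * f * d\<^sup>2 / P + B / P + 1 / P" by (simp add: add_divide_distrib)
      thus ?thesis using A B1 B2 B3 by linarith
    qed
    thus "\<bar>c / v * exp (- (f / v\<^sup>2) * (d * v powr n)\<^sup>2) + e - c / v\<bar> < (c * f * d\<^sup>2 + B + 1) / v powr (1 - \<epsilon>)"
      unfolding a_def P_def by simp
  qed
  have "c * f * d\<^sup>2 + B + 1 > 0" using assms by (simp add: add_nonneg_pos)
  thus ?thesis using key e0 assms by blast
qed


lemma dQ:
  fixes f d n :: real
  assumes "snd p > 0"
  shows "((\<lambda>p. f / (snd p)\<^sup>2 * (fst p + d * snd p powr n)\<^sup>2) has_derivative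
     (\<lambda>h. fst h * (f / (snd p)\<^sup>2 * 2 * (fst p + d * snd p powr n))
        + snd h * (- 2 * f * (fst p + d * snd p powr n)\<^sup>2 / (snd p)^3
           + f / (snd p)\<^sup>2 * 2 * (fst p + d * snd p powr n) * (d * n * snd p powr n / snd p)))) (at p)"
proof -
  have s: "((\<lambda>p. snd p) has_derivative snd) (at p)" "((\<lambda>p. fst p) has_derivative fst) (at p)"
    by (auto intro!: derivative_eq_intros)
  show ?thesis
  using assms
  apply (auto intro!: derivative_eq_intros s simp: fun_eq_iff)
  apply (simp add: field_simps)
  apply algebra
  done
qed

lemma dE:
  fixes c :: real
  assumes "snd p > 0" and Q: "(Q has_derivative (\<lambda>h. fst h * Qt + snd h * Qv)) (at p)"
  shows "((\<lambda>p. c / snd p * exp (- Q p)) has_derivative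
     (\<lambda>h. fst h * (c / snd p * exp (- Q p) * (- Qt))
        + snd h * (- c / (snd p)\<^sup>2 * exp (- Q p) + c / snd p * exp (- Q p) * (- Qv)))) (at p)"
proof -
  have s: "((\<lambda>p. snd p) has_derivative snd) (at p)" "((\<lambda>p. fst p) has_derivative fst) (at p)"
    by (auto intro!: derivative_eq_intros)
  show ?thesis
  using assms
  apply (auto intro!: derivative_eq_intros s Q simp: fun_eq_iff)
  apply (simp add: field_simps)
  apply algebra
  done
qed

theorem lemma2:
  fixes c f d n :: real and \<eta> :: "real \<times> real \<Rightarrow> real"
  assumes "c > 0" and "f > 0" and "n \<ge> 1"
    and eta: "\<exists>W Et Ev B. open W \<and> (0,0) \<in> W \<and>
       (\<forall>p\<in>W \<inter> H2. (\<eta> has_derivative (\<lambda>h. fst h * Et p + snd h * Ev p)) (at p within W \<inter> H2)) \<and>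
       continuous_on (W \<inter> H2) Et \<and> continuous_on (W \<inter> H2) Ev \<and>
       (\<forall>p\<in>W \<inter> H2. \<bar>\<eta> p\<bar> \<le> B \<and> \<bar>Et p\<bar> \<le> B)"
  shows "\<exists>\<omega> > 0. \<exists>W \<nu>. open W \<and> (0,0) \<in> W \<and>
           Psi1_nu \<omega> (W \<inter> H2) \<nu> (chi_fun c f d n \<eta>) \<and>
           ((\<lambda>t. inverse (\<nu> t)) \<longlongrightarrow> 0) (at 0)"
proof -
  note cf = assms(1-3)
  obtain W0 Et Ev B where W0: "open W0" "(0,0) \<in> W0"
    and deta: "\<forall>p\<in>W0 \<inter> H2. (\<eta> has_derivative (\<lambda>h. fst h * Et p + snd h * Ev p)) (at p within W0 \<inter> H2)"
    and cEt: "continuous_on (W0 \<inter> H2) Et" and cEv: "continuous_on (W0 \<inter> H2) Ev"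
    and bnd: "\<forall>p\<in>W0 \<inter> H2. \<bar>\<eta> p\<bar> \<le> B \<and> \<bar>Et p\<bar> \<le> B"
    using eta by blast
  have B0: "B \<ge> 0" using bnd W0(2) by (force simp: H2_def)
  define W where "W = W0 \<inter> ball (0,0) 1"
  have oW: "open W" and W0in: "(0::real,0::real) \<in> W" using W0 by (auto simp: W_def)
  define Us where "Us = W \<inter> H2 - {(0,0)}"
  define Ov where "Ov = {p \<in> Us. snd p \<noteq> 0}"
  have inUs: "p \<in> W0 \<inter> H2 \<and> \<bar>fst p\<bar> < 1 \<and> 0 \<le> snd p \<and> snd p < 1 \<and> p \<noteq> (0,0)" if "p \<in> Us" for p
  proof -
    have nz: "norm ((0::real,0::real) - p) = norm p" by (simp add: zero_prod_def[symmetric])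
    have "norm p < 1" using that nz by (auto simp: Us_def W_def dist_norm)
    moreover have "\<bar>fst p\<bar> \<le> norm p" "\<bar>snd p\<bar> \<le> norm p"
      using norm_fst_le[of "fst p" "snd p"] norm_snd_le[of "snd p" "fst p"] by auto
    ultimately show ?thesis using that by (auto simp: Us_def W_def H2_def)
  qed
  have inOv: "p \<in> W0 \<inter> H2 \<and> \<bar>fst p\<bar> < 1 \<and> 0 < snd p \<and> snd p < 1" if "p \<in> Ov" for p
    using inUs[of p] that by (auto simp: Ov_def)
  define Q where "Q = (\<lambda>p::real\<times>real. f / (snd p)\<^sup>2 * (fst p + d * snd p powr n)\<^sup>2)"
  define G where "G = (\<lambda>p::real\<times>real. if snd p > 0 then c / snd p * exp (- Q p) else 0)"
  have chi_eq: "chi_fun c f d n \<eta> = (\<lambda>p. G p + \<eta> p)"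
    by (rule ext) (simp add: chi_fun_def G_def Q_def Let_def)
  define Dt where "Dt = (\<lambda>p::real\<times>real. c / snd p * exp (- Q p) * (-(f / (snd p)\<^sup>2 * 2 * (fst p + d * snd p powr n))) + Et p)"
  define Dv where "Dv = (\<lambda>p::real\<times>real. (- c / (snd p)\<^sup>2 * exp (- Q p) + c / snd p * exp (- Q p) *
      (-(- 2 * f * (fst p + d * snd p powr n)\<^sup>2 / (snd p)^3
           + f / (snd p)\<^sup>2 * 2 * (fst p + d * snd p powr n) * (d * n * snd p powr n / snd p)))) + Ev p)"
  have oPos: "open {q::real\<times>real. 0 < snd q}"
    by (intro open_Collect_less continuous_intros)
  have dG: "(G has_derivative (\<lambda>h. fst h * (Dt p - Et p) + snd h * (Dv p - Ev p))) (at p)"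
    if "snd p > 0" for p
  proof -
    have q: "(Q has_derivative (\<lambda>h. fst h * (f / (snd p)\<^sup>2 * 2 * (fst p + d * snd p powr n))
        + snd h * (- 2 * f * (fst p + d * snd p powr n)\<^sup>2 / (snd p)^3
           + f / (snd p)\<^sup>2 * 2 * (fst p + d * snd p powr n) * (d * n * snd p powr n / snd p)))) (at p)"
      unfolding Q_def by (rule dQ[OF that])
    have e: "((\<lambda>p. c / snd p * exp (- Q p)) has_derivative (\<lambda>h. fst h * (Dt p - Et p) + snd h * (Dv p - Ev p))) (at p)"
      unfolding Dt_def Dv_def using dE[OF that q, of c] by simp
    show ?thesis
      by (rule has_derivative_transform_within_open[OF e oPos]) (use that in \<open>auto simp: G_def\<close>)
  qed

  have P2: "\<forall>p\<in>Ov. (chi_fun c f d n \<eta> has_derivative (\<lambda>h. fst h * Dt p + snd h * Dv p)) (at p)"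
  proof
    fix p assume p: "p \<in> Ov"
    have sp: "snd p > 0" and pW: "p \<in> W0 \<inter> H2" using inOv[OF p] by auto
    have "W0 \<inter> {q. 0 < snd q} \<subseteq> interior (W0 \<inter> H2)"
      by (intro interior_maximal open_Int W0 oPos) (auto simp: H2_def)
    hence int: "p \<in> interior (W0 \<inter> H2)" using pW sp by auto
    have "(\<eta> has_derivative (\<lambda>h. fst h * Et p + snd h * Ev p)) (at p)"
      using deta pW at_within_interior[OF int] by metis
    hence "((\<lambda>q. G q + \<eta> q) has_derivative (\<lambda>h. (fst h * (Dt p - Et p) + snd h * (Dv p - Ev p)) + (fst h * Et p + snd h * Ev p))) (at p)"
      by (rule has_derivative_add[OF dG[OF sp]])
    thus "(chi_fun c f d n \<eta> has_derivative (\<lambda>h. fst h * Dt p + snd h * Dv p)) (at p)"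
      unfolding chi_eq by (rule has_derivative_eq_rhs) (simp add: fun_eq_iff algebra_simps)
  qed
  have ceta: "continuous_on (W0 \<inter> H2) \<eta>"
    unfolding continuous_on_eq_continuous_within using deta has_derivative_continuous by blast
  have cG: "continuous_on Us G"
    unfolding continuous_on_eq_continuous_within
  proof
    fix p assume p: "p \<in> Us"
    show "continuous (at p within Us) G"
    proof (cases "snd p > 0")
      case True
      then show ?thesis using has_derivative_continuous[OF dG[OF True]] continuous_at_imp_continuous_at_within by blast
    next
      case False
      hence s0: "snd p = 0" using inUs[OF p] by auto
      define t0 where "t0 = fst p"
      have t0: "t0 \<noteq> 0" using inUs[OF p] s0 t0_def by (cases p) auto
      have Gp: "G p = 0" using s0 G_def by simp
      define h where "h = (\<lambda>q::real\<times>real. c * \<bar>snd q\<bar> / (f * (\<bar>fst q\<bar> - \<bar>d\<bar> * \<bar>snd q\<bar>)\<^sup>2))"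
      have hlim: "(h \<longlongrightarrow> 0) (at p within Us)"
      proof -
        have "(h \<longlongrightarrow> c * \<bar>snd p\<bar> / (f * (\<bar>fst p\<bar> - \<bar>d\<bar> * \<bar>snd p\<bar>)\<^sup>2)) (at p within Us)"
          unfolding h_def using t0 s0 cf t0_def by (intro tendsto_intros) auto
        thus ?thesis using s0 by simp
      qed
      define r where "r = min (\<bar>t0\<bar>/2) (\<bar>t0\<bar>/(4*(\<bar>d\<bar>+1)))"
      have r0: "r > 0" using t0 r_def by (simp add: add_nonneg_pos)
      have ev: "eventually (\<lambda>q. norm (G q) \<le> h q) (at p within Us)"
        unfolding eventually_at
      proof (intro exI[of _ r] conjI ballI impI r0)
        fix q assume q: "q \<in> Us" and qd: "q \<noteq> p \<and> dist q p < r"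
        have "dist (fst q) (fst p) < r" using dist_fst_le[of q p] qd by linarith
        hence d1: "\<bar>fst q - t0\<bar> < \<bar>t0\<bar>/2" using r_def t0_def by (simp add: dist_real_def)
        have "dist (snd q) (snd p) < r" using dist_snd_le[of q p] qd by linarith
        hence d2: "\<bar>snd q\<bar> < \<bar>t0\<bar>/(4*(\<bar>d\<bar>+1))" using r_def s0 by (simp add: dist_real_def)
        hence "(\<bar>d\<bar>+1) * \<bar>snd q\<bar> < \<bar>t0\<bar>/4"
          by (simp add: field_simps add_nonneg_pos)
        moreover have "\<bar>d\<bar> * \<bar>snd q\<bar> \<le> (\<bar>d\<bar>+1) * \<bar>snd q\<bar>" by (simp add: mult_right_mono)
        ultimately have m: "\<bar>fst q\<bar> - \<bar>d\<bar> * \<bar>snd q\<bar> > 0" using d1 by linarith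
        have hq: "h q \<ge> 0" unfolding h_def using cf by simp
        show "norm (G q) \<le> h q"
        proof (cases "snd q > 0")
          case True
          have Gq: "G q = c / snd q * exp (- (f / (snd q)\<^sup>2) * (fst q + d * snd q powr n)\<^sup>2)"
            by (simp add: G_def Q_def True)
          have "G q \<le> c * snd q / (f * (\<bar>fst q\<bar> - \<bar>d\<bar> * snd q)\<^sup>2)"
            unfolding Gq using KB[of c f n "snd q" "fst q" d] cf True inUs[OF q] m by simp
          also have "\<dots> = h q" using True by (simp add: h_def)
          finally have "G q \<le> h q" .
          moreover have "G q \<ge> 0" using Gq cf True by simp
          ultimately show ?thesis by simp
        next
          case False
          thus ?thesis using hq by (simp add: G_def)
        qed
      qed
      have "(G \<longlongrightarrow> 0) (at p within Us)" by (rule Lim_null_comparison[OF ev hlim])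
      thus ?thesis using Gp by (simp add: continuous_within)
    qed
  qed
  have P1: "continuous_on Us (chi_fun c f d n \<eta>)" unfolding chi_eq
    by (intro continuous_on_add cG continuous_on_subset[OF ceta]) (auto dest: inUs)
  have P3a: "continuous_on Ov Dt" unfolding Dt_def Q_def
    by (intro continuous_intros continuous_on_subset[OF cEt]) (auto dest: inOv)
  have P3b: "continuous_on Ov Dv" unfolding Dv_def Q_def
    by (intro continuous_intros continuous_on_subset[OF cEv]) (auto dest: inOv)

  obtain c' K1 \<epsilon> where c'K: "c' > 0" "K1 > 0" "\<epsilon> > 0"
    and key: "\<forall>v e. 0 < v \<and> v < 1 \<and> \<bar>e\<bar> \<le> B \<longrightarrow>
           \<bar>c / v * exp (- (f / v\<^sup>2) * (d * v powr n)\<^sup>2) + e - c' / v\<bar> < K1 / v powr (1 - \<epsilon>)"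
    using C3[OF cf B0, of d] by blast
  define K2 where "K2 = c * (f + 1) + B + 1"
  have K2: "K2 > 0" using cf B0 K2_def by (simp add: add_nonneg_pos)
  have P4a: "\<forall>v. (0, v) \<in> Us \<and> v \<noteq> 0 \<longrightarrow> \<bar>chi_fun c f d n \<eta> (0, v) - c' / v\<bar> < K1 / v powr (1 - \<epsilon>)"
  proof (intro allI impI)
    fix v assume h: "(0, v) \<in> Us \<and> v \<noteq> 0"
    have v: "0 < v" "v < 1" and e: "\<bar>\<eta> (0, v)\<bar> \<le> B" using inUs[of "(0,v)"] h bnd by auto
    have "chi_fun c f d n \<eta> (0, v) = c / v * exp (- (f / v\<^sup>2) * (d * v powr n)\<^sup>2) + \<eta> (0, v)"
      using v by (simp add: chi_eq G_def Q_def)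
    thus "\<bar>chi_fun c f d n \<eta> (0, v) - c' / v\<bar> < K1 / v powr (1 - \<epsilon>)"
      using key v e by simp
  qed
  have P4b: "\<forall>t v. (t, v) \<in> Us \<and> v \<noteq> 0 \<longrightarrow> \<bar>Dt (t, v)\<bar> < K2 / v\<^sup>2"
  proof (intro allI impI)
    fix t v assume h: "(t, v) \<in> Us \<and> v \<noteq> 0"
    have v: "0 < v" "v < 1" and e: "\<bar>Et (t, v)\<bar> \<le> B" using inUs[of "(t,v)"] h bnd by auto
    have A: "\<bar>c / v * exp (- (f / v\<^sup>2 * (t + d * v powr n)\<^sup>2)) * (-(f / v\<^sup>2 * 2 * (t + d * v powr n)))\<bar> \<le> c * (f + 1) / v\<^sup>2"
      by (rule DtB) (use cf v in auto)
    have v2: "v\<^sup>2 \<le> 1" "v\<^sup>2 > 0" using v by (auto simp: power_le_one)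
    have "B \<le> B / v\<^sup>2" using v2 B0 by (simp add: le_divide_eq mult_left_le)
    moreover have "0 < 1 / v\<^sup>2" using v2 by simp
    moreover have "K2 / v\<^sup>2 = c * (f + 1) / v\<^sup>2 + B / v\<^sup>2 + 1 / v\<^sup>2" unfolding K2_def by (simp add: add_divide_distrib)
    moreover have "\<bar>Dt (t, v)\<bar> \<le> \<bar>c / v * exp (- (f / v\<^sup>2 * (t + d * v powr n)\<^sup>2)) * (-(f / v\<^sup>2 * 2 * (t + d * v powr n)))\<bar> + \<bar>Et (t, v)\<bar>"
    proof -
      have eqD: "Dt (t, v) = c / v * exp (- (f / v\<^sup>2 * (t + d * v powr n)\<^sup>2)) * (-(f / v\<^sup>2 * 2 * (t + d * v powr n))) + Et (t, v)"
        unfolding Dt_def Q_def by simp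
      show ?thesis unfolding eqD by (rule abs_triangle_ineq)
    qed
    ultimately show "\<bar>Dt (t, v)\<bar> < K2 / v\<^sup>2" using A e by linarith
  qed
  define \<nu> where "\<nu> = (\<lambda>t::real. (1 + 2 * \<bar>d\<bar>) / \<bar>t\<bar>)"
  have dd: "1 + 2 * \<bar>d\<bar> > 0" by (simp add: add_pos_nonneg)
  have P5: "\<forall>t. t \<noteq> 0 \<longrightarrow> \<nu> t > 0" using dd by (simp add: \<nu>_def)
  define \<omega> where "\<omega> = 4 * c / f + B + 1"
  have \<omega>0: "\<omega> > 0" using cf B0 \<omega>_def by (simp add: add_nonneg_pos)
  have P6: "\<forall>t v. (t, v) \<in> Us \<and> t \<noteq> 0 \<and> 0 \<le> v \<and> v < \<bar>t\<bar> / \<nu> t \<longrightarrow> \<bar>chi_fun c f d n \<eta> (t, v)\<bar> \<le> \<omega>"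
  proof (intro allI impI)
    fix t v assume h: "(t, v) \<in> Us \<and> t \<noteq> 0 \<and> 0 \<le> v \<and> v < \<bar>t\<bar> / \<nu> t"
    have v: "0 \<le> v" "v < 1" "\<bar>t\<bar> < 1" and e: "\<bar>\<eta> (t, v)\<bar> \<le> B" using inUs[of "(t,v)"] h bnd by auto
    have t0: "t \<noteq> 0" using h by simp
    have Gb: "\<bar>G (t, v)\<bar> \<le> 4 * c / f"
    proof (cases "v > 0")
      case False thus ?thesis using cf by (simp add: G_def)
    next
      case True
      have "\<bar>t\<bar> / \<nu> t = t\<^sup>2 / (1 + 2 * \<bar>d\<bar>)" using t0 by (simp add: \<nu>_def power2_eq_square)
      hence vlt: "v * (1 + 2 * \<bar>d\<bar>) < t\<^sup>2" using h dd by (simp add: less_divide_eq)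
      have tt1: "t\<^sup>2 = \<bar>t\<bar> * \<bar>t\<bar>" by (simp add: power2_eq_square)
      have tt2: "\<bar>t\<bar> * \<bar>t\<bar> \<le> \<bar>t\<bar>" using v(3) by (intro mult_left_le) auto
      have tt: "t\<^sup>2 \<le> \<bar>t\<bar>" using tt1 tt2 by linarith
      have "2 * (\<bar>d\<bar> * v) \<le> v * (1 + 2 * \<bar>d\<bar>)" using True by (simp add: algebra_simps)
      hence dv: "\<bar>d\<bar> * v \<le> \<bar>t\<bar> / 2" using vlt tt by linarith
      define m where "m = \<bar>t\<bar> - \<bar>d\<bar> * v"
      have m: "m \<ge> \<bar>t\<bar> / 2" "m > 0" using dv t0 m_def by auto
      have Gq: "G (t, v) = c / v * exp (- (f / v\<^sup>2) * (t + d * v powr n)\<^sup>2)"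
        by (simp add: G_def Q_def True)
      have G0: "G (t, v) \<ge> 0" using Gq cf True by simp
      have "G (t, v) \<le> c * v / (f * m\<^sup>2)"
        unfolding Gq m_def using KB[of c f n v t d] cf True v m m_def by simp
      also have "\<dots> \<le> c * v / (f * (\<bar>t\<bar> / 2)\<^sup>2)"
      proof -
        have "(\<bar>t\<bar> / 2)\<^sup>2 \<le> m\<^sup>2" using m t0 by (intro power_mono) auto
        hence "f * (\<bar>t\<bar> / 2)\<^sup>2 \<le> f * m\<^sup>2" using cf by simp
        moreover have "f * (\<bar>t\<bar> / 2)\<^sup>2 > 0" using cf t0 by simp
        moreover have "c * v \<ge> 0" using cf True by simp
        ultimately show ?thesis by (intro divide_left_mono) auto
      qed
      also have "\<dots> = 4 * c * v / (f * t\<^sup>2)" by (simp add: power_divide field_simps)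
      also have "\<dots> \<le> 4 * c / f"
      proof -
        have "v \<le> v * (1 + 2 * \<bar>d\<bar>)" using True by (simp add: algebra_simps)
        hence "v \<le> t\<^sup>2" using vlt by linarith
        hence "4 * c * v \<le> 4 * c * t\<^sup>2" using cf by simp
        thus ?thesis using cf t0 by (simp add: divide_simps)
      qed
      finally show ?thesis using G0 by simp
    qed
    have "chi_fun c f d n \<eta> (t, v) = G (t, v) + \<eta> (t, v)" by (simp add: chi_eq)
    thus "\<bar>chi_fun c f d n \<eta> (t, v)\<bar> \<le> \<omega>" using Gb e \<omega>_def by simp
  qed
  have lim: "((\<lambda>t. inverse (\<nu> t)) \<longlongrightarrow> 0) (at 0)"
  proof -
    have "((\<lambda>t. \<bar>t\<bar> / (1 + 2 * \<bar>d\<bar>)) \<longlongrightarrow> \<bar>0\<bar> / (1 + 2 * \<bar>d\<bar>)) (at (0::real))"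
      by (intro tendsto_intros) (use dd in simp)
    thus ?thesis by (simp add: \<nu>_def)
  qed
  have Psi: "Psi1_nu \<omega> (W \<inter> H2) \<nu> (chi_fun c f d n \<eta>)"
    unfolding Psi1_nu_def Let_def Us_def[symmetric] Ov_def[symmetric]
    using P1 P2 P3a P3b c'K K2 P4a P4b P5 P6 by blast
  show ?thesis using Psi lim oW W0in \<omega>0 by blast
qed

end
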